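(* Let $f$ and $g$ be multiplicative functions on $W_{\infty\infty}$ (with values in a commutative ring containing $\mathbf{Q}$, e.g. $\mathbf{C}$), and let $F(x,y)=\sum_{i,j\ge0}f_{ij}x^iy^j$, $G(x,y)=\sum_{i,j\ge0}g_{ij}x^iy^j$, $(F*G)(x,y)=\sum_{i,j\ge0}(f*g)_{ij}x^iy^j$ as formal power series. Let $F_0=F(x,0)$, $G_0=G(0,y)$, $\tilde F(x,y)=F(x,G_0\,y)$ and $\tilde G(x,y)=G(F_0\,x,y)$. Then $$\frac{1}{F*G}=\frac{1}{\tilde F\,G_0}+\frac{1}{F_0\,\tilde G}-\frac{1}{F_0\,G_0}.$$
   Context: $W_{\infty\infty}$ is the poset of shuffles over the infinite alphabets $\mathcal{A}_\infty=\{a_1,a_2,\dots\}$ and $\mathcal{X}_\infty=\{x_1,x_2,\dots\}$: its elements are finite words (possibly empty) with distinct letters from $\mathcal{A}_\infty\cup\mathcal{X}_\infty$ in which the letters of each alphabet occur in increasing order of subscripts, ordered by the reflexive-transitive closure of: $w\lessdot w'$ iff $w'$ is obtained from $w$ by deleting a letter of $\mathcal{A}_\infty$ or inserting a letter of $\mathcal{X}_\infty$. For finite $i,j$, $W_{ij}$ is the analogous poset over $\{a_1,\dots,a_i\}$ and $\{x_1,\dots,x_j\}$. Canonical isomorphism type of an interval $[u,v]$: write $u=u_1\cdots u_r$, $v=v_1\cdots v_s$, let $u_{i_1}\cdots u_{i_t}$ and $v_{j_1}\cdots v_{j_t}$ (increasing indices) be the subwords formed by the letters common to $u$ and $v$;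 with $i_0=j_0=0$, $i_{t+1}=r+1$, $j_{t+1}=s+1$, the canonical type is $\prod_{p=1}^{t+1}W_{i_p-i_{p-1}-1,\,j_p-j_{p-1}-1}=\prod_{i,j}W_{ij}^{c_{ij}}$. A multiplicative function is a function $f$ on intervals of $W_{\infty\infty}$ with values $f_{ij}$ ($i,j\ge0$), $f_{00}=1$, such that $f(u,v)=\prod_{i,j}f_{ij}^{c_{ij}}$ whenever $[u,v]$ has canonical type $\prod W_{ij}^{c_{ij}}$. The convolution is $(f*g)(u,v)=\sum_{u\le w\le v}f(u,w)g(w,v)$, and $(f*g)_{ij}$ denotes its value on an interval of canonical type $W_{ij}$, e.g. $[a_1\cdots a_i,\ x_1\cdots x_j]$. *)

theory Defs
  imports Main "HOL-Computational_Algebra.Formal_Power_Series"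
begin

text \<open>Letters: A i stands for a_i, X j stands for x_j (subscripts are positive).\<close>
datatype letter = A nat | X nat

type_synonym word = "letter list"

definition a_subs :: "word \<Rightarrow> nat list" where
  "a_subs w = concat (map (\<lambda>l. case l of A i \<Rightarrow> [i] | X _ \<Rightarrow> []) w)"

definition x_subs :: "word \<Rightarrow> nat list" where
  "x_subs w = concat (map (\<lambda>l. case l of A _ \<Rightarrow> [] | X j \<Rightarrow> [j]) w)"

definition valid_word :: "word \<Rightarrow> bool" where
  "valid_word w \<longleftrightarrow> distinct w \<and> sorted (a_subs w) \<and> sorted (x_subs w)
      \<and> (\<forall>i \<in> set (a_subs w). i \<ge> 1) \<and> (\<forall>j \<in> set (x_subs w). j \<ge> 1)"

definition wcover :: "word \<Rightarrow> word \<Rightarrow> bool" where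
  "wcover u v \<longleftrightarrow> valid_word u \<and> valid_word v \<and>
     ((\<exists>p q i. u = p @ A i # q \<and> v = p @ q) \<or> (\<exists>p q j. u = p @ q \<and> v = p @ X j # q))"

definition wle :: "word \<Rightarrow> word \<Rightarrow> bool" where
  "wle = wcover\<^sup>*\<^sup>*"

text \<open>gaps P w: the numbers of letters not satisfying P before the first letter satisfying P,
  between consecutive such letters, and after the last one (a list of length t+1).\<close>
fun gaps :: "(letter \<Rightarrow> bool) \<Rightarrow> word \<Rightarrow> nat list" where
  "gaps P [] = [0]"
| "gaps P (l # w) = (if P l then 0 # gaps P w
                     else (case gaps P w of [] \<Rightarrow> [1] | n # ns \<Rightarrow> Suc n # ns))"

text \<open>Canonical type of [u,v]: the list of pairs (i_p - i_{p-1} - 1, j_p - j_{p-1} - 1),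
  p = 1..t+1, i.e. the interval is isomorphic to the product of the W_{ij} in the list.\<close>
definition ctype :: "word \<Rightarrow> word \<Rightarrow> (nat \<times> nat) list" where
  "ctype u v = zip (gaps (\<lambda>l. l \<in> set v) u) (gaps (\<lambda>l. l \<in> set u) v)"

text \<open>The standard interval of type W_{ij}: [a_1...a_i, x_1...x_j].\<close>
definition awd :: "nat \<Rightarrow> word" where "awd i = map A [1..<Suc i]"
definition xwd :: "nat \<Rightarrow> word" where "xwd j = map X [1..<Suc j]"

definition fval :: "(word \<Rightarrow> word \<Rightarrow> 'a) \<Rightarrow> nat \<Rightarrow> nat \<Rightarrow> 'a" where
  "fval f i j = f (awd i) (xwd j)"

definition multiplicative :: "(word \<Rightarrow> word \<Rightarrow> 'a::comm_monoid_mult) \<Rightarrow> bool" where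
  "multiplicative f \<longleftrightarrow> fval f 0 0 = 1 \<and>
     (\<forall>u v. valid_word u \<and> valid_word v \<and> wle u v \<longrightarrow>
        f u v = prod_list (map (\<lambda>(i, j). fval f i j) (ctype u v)))"

definition conv :: "(word \<Rightarrow> word \<Rightarrow> 'a::comm_semiring_1) \<Rightarrow> (word \<Rightarrow> word \<Rightarrow> 'a) \<Rightarrow> word \<Rightarrow> word \<Rightarrow> 'a" where
  "conv f g u v = (\<Sum>w \<in> {w. wle u w \<and> wle w v}. f u w * g w v)"

text \<open>A bivariate series sum c_{ij} x^i y^j is represented as an element of 'a fps fps:
  the outer variable is y, the inner variable is x.\<close>
definition gen_series :: "(nat \<Rightarrow> nat \<Rightarrow> 'a::zero) \<Rightarrow> 'a fps fps" where
  "gen_series c = Abs_fps (\<lambda>j. Abs_fps (\<lambda>i. c i j))"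

definition inv2 :: "'a::comm_ring_1 fps fps \<Rightarrow> 'a fps fps" where
  "inv2 H = (THE K. H * K = 1)"

definition at_y0 :: "'a::comm_ring_1 fps fps \<Rightarrow> 'a fps fps" where
  "at_y0 H = fps_const (fps_nth H 0)"

definition at_x0 :: "'a::comm_ring_1 fps fps \<Rightarrow> 'a fps fps" where
  "at_x0 H = Abs_fps (\<lambda>j. fps_const (fps_nth (fps_nth H j) 0))"

definition subst_y :: "'a::comm_ring_1 fps fps \<Rightarrow> 'a fps fps \<Rightarrow> 'a fps fps" where
  "subst_y H S = H oo (S * fps_X)"

definition subst_x :: "'a::comm_ring_1 fps fps \<Rightarrow> 'a fps \<Rightarrow> 'a fps fps" where
  "subst_x H S = Abs_fps (\<lambda>j. (fps_nth H j) oo (S * fps_X))"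

end

theory Submission
  imports Defs "HOL-Library.Sublist"
begin

unbundle fps_syntax

lemma compose_Xmult:
  fixes a c :: "'b::comm_ring_1 fps"
  assumes c0: "c$0 = 0"
  shows "(fps_X * a) oo c = c * (a oo c)"
proof (rule fps_ext)
  fix n
  have z: "\<And>i m. m < i \<Longrightarrow> (c^i)$m = 0" using startsby_zero_power_prefix[OF c0] by blast
  have e1: "(a oo c)$m = (\<Sum>i=0..n. a$i * (c^i)$m)" if "m \<le> n" for m
    unfolding fps_compose_nth
    by (rule sum.mono_neutral_left) (use that z in auto)
  have "(c * (a oo c))$n = (\<Sum>k=0..n. c$k * (\<Sum>i=0..n. a$i * (c^i)$(n-k)))"
    unfolding fps_mult_nth by (rule sum.cong) (auto simp: e1)
  also have "\<dots> = (\<Sum>i=0..n. a$i * (\<Sum>k=0..n. c$k * (c^i)$(n-k)))"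
  proof -
    have "(\<Sum>k=0..n. c$k * (\<Sum>i=0..n. a$i * (c^i)$(n-k))) = (\<Sum>k=0..n. \<Sum>i=0..n. a$i * (c$k * (c^i)$(n-k)))"
      by (simp add: sum_distrib_left mult.left_commute)
    also have "\<dots> = (\<Sum>i=0..n. \<Sum>k=0..n. a$i * (c$k * (c^i)$(n-k)))"
      by (rule sum.swap)
    also have "\<dots> = (\<Sum>i=0..n. a$i * (\<Sum>k=0..n. c$k * (c^i)$(n-k)))"
      by (simp add: sum_distrib_left)
    finally show ?thesis .
  qed
  also have "\<dots> = (\<Sum>i=0..n. a$i * (c^(Suc i))$n)"
    by (simp add: fps_mult_nth)
  finally have R: "(c * (a oo c))$n = (\<Sum>i=0..n. a$i * (c^(Suc i))$n)" .
  define g where "g i = (if i = 0 then 0 else a$(i-1)) * (c^i)$n" for i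
  have L: "((fps_X * a) oo c)$n = (\<Sum>i=0..n. g i)"
    unfolding fps_compose_nth g_def by simp
  have "(\<Sum>i=0..Suc n. g i) = (\<Sum>i=0..n. g i)" using z[of n "Suc n"] by (simp add: g_def)
  moreover have "(\<Sum>i=0..Suc n. g i) = g 0 + (\<Sum>i=0..n. g (Suc i))"
    by (simp add: sum.atLeast0_atMost_Suc_shift comp_def del: sum.cl_ivl_Suc)
  ultimately show "((fps_X * a) oo c)$n = (c * (a oo c))$n"
    using L R by (simp add: g_def)
qed

lemma fps_decomp: "(a::'b::comm_ring_1 fps) = fps_const (a$0) + fps_X * fps_shift 1 a"
  by (rule fps_ext) (case_tac n, auto)

lemma compose_rec:
  fixes a c :: "'b::comm_ring_1 fps"
  assumes c0: "c$0 = 0"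
  shows "a oo c = fps_const (a$0) + c * (fps_shift 1 a oo c)"
proof -
  have "a oo c = (fps_const (a$0) + fps_X * fps_shift 1 a) oo c" using fps_decomp[of a] by simp
  also have "\<dots> = fps_const (a$0) + c * (fps_shift 1 a oo c)"
    by (simp add: fps_compose_add_distrib compose_Xmult[OF c0])
  finally show ?thesis .
qed

definition phi :: "(nat \<Rightarrow> nat \<Rightarrow> 'a::comm_ring_1) \<Rightarrow> nat \<Rightarrow> 'a fps" where
  "phi ff d = Abs_fps (\<lambda>i. ff i d)"
definition Psi :: "(nat \<Rightarrow> nat \<Rightarrow> 'a::comm_ring_1) \<Rightarrow> nat \<Rightarrow> 'a fps fps" where
  "Psi gg c = Abs_fps (\<lambda>j. fps_const (gg c j))"
definition Rr :: "(nat \<Rightarrow> nat \<Rightarrow> 'a::comm_ring_1) \<Rightarrow> (nat \<Rightarrow> nat \<Rightarrow> 'a) \<Rightarrow> nat \<Rightarrow> 'a fps fps" where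
  "Rr ff gg c = Abs_fps (\<lambda>j. Abs_fps (\<lambda>i. gg (i + c) j) oo (phi ff 0 * fps_X))"
definition Ss :: "(nat \<Rightarrow> nat \<Rightarrow> 'a::comm_ring_1) \<Rightarrow> (nat \<Rightarrow> nat \<Rightarrow> 'a) \<Rightarrow> nat \<Rightarrow> 'a fps fps" where
  "Ss ff gg d = fps_shift d (gen_series ff) oo (Psi gg 0 * fps_X)"

lemma R_rec: "Rr ff gg c = Psi gg c + fps_const fps_X * fps_const (phi ff 0) * Rr ff gg (Suc c)"
proof (rule fps_ext)
  fix j
  have b0: "(phi ff 0 * fps_X) $ 0 = 0" by simp
  have sh: "fps_shift (Suc 0) (Abs_fps (\<lambda>i. gg (i + c) j)) = Abs_fps (\<lambda>i. gg (Suc (i + c)) j)"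
    by (rule fps_ext) simp
  show "Rr ff gg c $ j = (Psi gg c + fps_const fps_X * fps_const (phi ff 0) * Rr ff gg (Suc c)) $ j"
    unfolding Rr_def Psi_def
    by (subst compose_rec[OF b0]) (simp add: sh mult_ac)
qed

lemma S_rec: "Ss ff gg d = fps_const (phi ff d) + fps_X * Psi gg 0 * Ss ff gg (Suc d)"
proof -
  have b0: "(Psi gg 0 * fps_X) $ 0 = 0" by simp
  have sh: "fps_shift (Suc 0) (fps_shift d (gen_series ff)) = fps_shift (Suc d) (gen_series ff)"
    by (rule fps_ext) simp
  have c0: "gen_series ff $ d = phi ff d"
    by (simp add: gen_series_def phi_def)
  show ?thesis
    unfolding Ss_def
    by (subst compose_rec[OF b0]) (simp add: sh c0 mult_ac)
qed

lemma co1: "(fps_const (phi ff d) * Psi gg c) $ j $ i = ff i d * gg c j"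
  by (simp add: phi_def Psi_def)

lemma co2: "(fps_const fps_X * fps_const (phi ff d) * Z) $ j $ i = (\<Sum>k<i. ff k d * Z $ j $ (i - Suc k))"
proof (cases i)
  case 0 then show ?thesis by (simp add: mult.assoc)
next
  case (Suc m)
  have "(fps_const fps_X * fps_const (phi ff d) * Z) $ j $ i = (fps_X * (phi ff d * Z $ j)) $ i"
    by (simp add: mult.assoc)
  also have "\<dots> = (phi ff d * Z $ j) $ m"
    using Suc by simp
  also have "\<dots> = (\<Sum>k=0..m. ff k d * Z $ j $ (m - k))"
    unfolding fps_mult_nth[of "phi ff d"] by (simp add: phi_def)
  also have "\<dots> = (\<Sum>k<i. ff k d * Z $ j $ (i - Suc k))"
    using Suc by (intro sum.cong) auto
  finally show ?thesis .
qed

lemma co3: "(fps_X * Psi gg c * Z) $ j $ i = (\<Sum>k<j. gg c k * Z $ (j - Suc k) $ i)"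
proof (cases j)
  case 0 then show ?thesis by (simp add: mult.assoc)
next
  case (Suc m)
  have "(fps_X * Psi gg c * Z) $ j $ i = (Psi gg c * Z) $ m $ i"
    using Suc by (simp add: mult.assoc)
  also have "\<dots> = (\<Sum>k=0..m. gg c k * Z $ (m - k) $ i)"
    unfolding fps_mult_nth[of "Psi gg c"] fps_sum_nth by (simp add: Psi_def)
  also have "\<dots> = (\<Sum>k<j. gg c k * Z $ (j - Suc k) $ i)"
    using Suc by (intro sum.cong) auto
  finally show ?thesis .
qed

lemma inv_ex:
  fixes H :: "'b::comm_ring_1 fps fps"
  assumes "H $ 0 $ 0 = 1"
  shows "\<exists>K. H * K = 1"
proof -
  have "H $ 0 * fps_right_inverse (H $ 0) 1 = 1"
    by (rule fps_right_inverse) (simp add: assms)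
  then have "H * fps_right_inverse H (fps_right_inverse (H $ 0) 1) = 1"
    by (rule fps_right_inverse)
  then show ?thesis by blast
qed

lemma inv2_eq:
  fixes H :: "'b::comm_ring_1 fps fps"
  assumes "H * K = 1"
  shows "inv2 H = K"
  unfolding inv2_def
proof (rule the_equality)
  show "H * K = 1" by fact
  fix K' assume "H * K' = 1"
  then have "K' = K' * (H * K)" using assms by simp
  also have "\<dots> = (H * K') * K" by (simp add: mult_ac)
  finally show "K' = K" using \<open>H * K' = 1\<close> by simp
qed

lemma GF_main:
  fixes ff gg :: "nat \<Rightarrow> nat \<Rightarrow> 'a::comm_ring_1" and hh :: "nat \<Rightarrow> nat \<Rightarrow> nat \<Rightarrow> nat \<Rightarrow> 'a"
  assumes f00: "ff 0 0 = 1" and g00: "gg 0 0 = 1"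
    and rec: "\<And>c d i j. hh c d i j = ff i d * gg c j + (\<Sum>k<i. ff k d * hh (Suc c) 0 (i - Suc k) j)
                  + (\<Sum>k<j. gg c k * hh 0 (Suc d) i (j - Suc k))"
  shows "inv2 (gen_series (\<lambda>i j. hh 0 0 i j)) =
     inv2 (subst_y (gen_series ff) (at_x0 (gen_series gg)) * at_x0 (gen_series gg))
   + inv2 (at_y0 (gen_series ff) * subst_x (gen_series gg) (gen_series ff $ 0))
   - inv2 (at_y0 (gen_series ff) * at_x0 (gen_series gg))"
proof -
  define xx :: "'a fps fps" where "xx = fps_const fps_X"
  define yy :: "'a fps fps" where "yy = fps_X"
  define P0 where "P0 = fps_const (phi ff 0)"
  define Q0 where "Q0 = Psi gg 0"
  define R where "R = Rr ff gg"
  define S where "S = Ss ff gg"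
  define Dd where "Dd = 1 - xx * yy * S 1 * R 1"
  have D00: "Dd $ 0 $ 0 = 1" unfolding Dd_def yy_def by (simp add: mult.assoc)
  obtain Di where Di: "Dd * Di = 1" using inv_ex[OF D00] by blast
  define L1 where "L1 = (P0 + yy * Q0 * S 1) * R 1 * Di"
  define K1 where "K1 = (Q0 + xx * L1) * S 1"
  define Lc where "Lc c = (P0 + yy * K1) * R c" for c
  define Kd where "Kd d = (Q0 + xx * L1) * S d" for d
  have LD: "L1 * Dd = (P0 + yy * Q0 * S 1) * R 1"
  proof -
    have "L1 * Dd = (P0 + yy * Q0 * S 1) * R 1 * (Dd * Di)" unfolding L1_def by (simp add: mult_ac)
    then show ?thesis using Di by simp
  qed
  have Lc1: "Lc 1 = L1"
  proof -
    have "Lc 1 = L1 * Dd + xx * yy * S 1 * R 1 * L1"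
      unfolding Lc_def K1_def LD by (simp add: algebra_simps)
    also have "\<dots> = L1" unfolding Dd_def by (simp add: algebra_simps)
    finally show ?thesis .
  qed
  have Rrec: "R c = Psi gg c + xx * P0 * R (Suc c)" for c
    unfolding R_def xx_def P0_def by (rule R_rec)
  have Srec: "S d = fps_const (phi ff d) + yy * Q0 * S (Suc d)" for d
    unfolding S_def yy_def Q0_def by (rule S_rec)
  have E1: "Lc c = fps_const (phi ff 0) * Psi gg c + xx * fps_const (phi ff 0) * Lc (Suc c)
                  + yy * Psi gg c * Kd 1" for c
    unfolding Lc_def Kd_def K1_def[symmetric]
    by (subst Rrec) (simp add: P0_def algebra_simps)
  have E2: "Kd d = fps_const (phi ff d) * Psi gg 0 + xx * fps_const (phi ff d) * Lc 1
                  + yy * Psi gg 0 * Kd (Suc d)" for d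
    unfolding Kd_def Lc1
    by (subst Srec) (simp add: Q0_def algebra_simps)
  have main: "\<forall>i j. i + j = n \<longrightarrow> (\<forall>c. hh c 0 i j = Lc c $ j $ i) \<and> (\<forall>d. hh 0 d i j = Kd d $ j $ i)" for n
  proof (induction n rule: less_induct)
    case (less n)
    show ?case
    proof (intro allI impI conjI)
      fix i j c assume n: "i + j = n"
      have IH1: "hh (Suc c) 0 (i - Suc k) j = Lc (Suc c) $ j $ (i - Suc k)" if "k < i" for k
        using less[of "i - Suc k + j"] that n by auto
      have IH2: "hh 0 (Suc 0) i (j - Suc k) = Kd 1 $ (j - Suc k) $ i" if "k < j" for k
        using less[of "i + (j - Suc k)"] that n by auto
      have "Lc c $ j $ i = ff i 0 * gg c j + (\<Sum>k<i. ff k 0 * Lc (Suc c) $ j $ (i - Suc k))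
           + (\<Sum>k<j. gg c k * Kd 1 $ (j - Suc k) $ i)"
        by (subst E1) (simp only: fps_add_nth co1 co2 co3 xx_def yy_def)
      then show "hh c 0 i j = Lc c $ j $ i"
        by (subst rec) (simp add: IH1 IH2)
    next
      fix i j d assume n: "i + j = n"
      have IH1: "hh (Suc 0) 0 (i - Suc k) j = Lc 1 $ j $ (i - Suc k)" if "k < i" for k
        using less[of "i - Suc k + j"] that n by auto
      have IH2: "hh 0 (Suc d) i (j - Suc k) = Kd (Suc d) $ (j - Suc k) $ i" if "k < j" for k
        using less[of "i + (j - Suc k)"] that n by auto
      have "Kd d $ j $ i = ff i d * gg 0 j + (\<Sum>k<i. ff k d * Lc 1 $ j $ (i - Suc k))
           + (\<Sum>k<j. gg 0 k * Kd (Suc d) $ (j - Suc k) $ i)"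
        by (subst E2) (simp only: fps_add_nth co1 co2 co3 xx_def yy_def)
      then show "hh 0 d i j = Kd d $ j $ i"
        by (subst rec) (simp add: IH1 IH2)
    qed
  qed
  have FG: "gen_series (\<lambda>i j. hh 0 0 i j) = Lc 0"
    by (rule fps_ext, rule fps_ext) (use main in \<open>simp add: gen_series_def\<close>)
  have Gt: "subst_x (gen_series gg) (gen_series ff $ 0) = R 0"
    by (rule fps_ext) (simp add: subst_x_def R_def Rr_def gen_series_def phi_def)
  have G0: "at_x0 (gen_series gg) = Q0"
    by (rule fps_ext) (simp add: at_x0_def Q0_def Psi_def gen_series_def)
  have Ft: "subst_y (gen_series ff) Q0 = S 0"
    by (simp add: subst_y_def S_def Ss_def Q0_def)
  have F0: "at_y0 (gen_series ff) = P0"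
    by (simp add: at_y0_def P0_def gen_series_def phi_def)
  define a where "a = R 0"
  define b where "b = S 0"
  have a_eq: "a = Q0 + xx * P0 * R 1" unfolding a_def by (subst Rrec) (simp add: Q0_def)
  have b_eq: "b = P0 + yy * Q0 * S 1" unfolding b_def by (subst Srec) (simp add: P0_def)
  have P00: "P0 $ 0 $ 0 = 1" by (simp add: P0_def phi_def f00)
  have Q00: "Q0 $ 0 $ 0 = 1" by (simp add: Q0_def Psi_def g00)
  have a00: "a $ 0 $ 0 = 1" unfolding a_eq using Q00 by (simp add: xx_def mult.assoc)
  have b00: "b $ 0 $ 0 = 1" unfolding b_eq using P00 by (simp add: yy_def mult.assoc)
  obtain ia where ia: "a * ia = 1" using inv_ex[OF a00] by blast
  obtain ib where ib: "b * ib = 1" using inv_ex[OF b00] by blast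
  obtain ip where ip: "P0 * ip = 1" using inv_ex[OF P00] by blast
  obtain iq where iq: "Q0 * iq = 1" using inv_ex[OF Q00] by blast
  have LDD: "Lc 0 * Dd = a * b"
  proof -
    have "Lc 0 * Dd = (P0 * Dd + yy * Q0 * S 1 * Dd + xx * yy * S 1 * (L1 * Dd)) * a"
      unfolding Lc_def K1_def a_def by (simp add: algebra_simps)
    also have "\<dots> = b * a" unfolding LD unfolding b_eq Dd_def by (simp add: algebra_simps)
    finally show ?thesis by (simp add: mult_ac)
  qed
  have key: "a * P0 + b * Q0 - a * b = P0 * Q0 * Dd"
    unfolding a_eq b_eq Dd_def by (simp add: algebra_simps)
  have i1: "inv2 (Lc 0) = Dd * ia * ib"
    by (rule inv2_eq) (metis LDD ia ib mult.assoc mult.commute mult.left_commute mult_1_right)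
  have i2: "inv2 (b * Q0) = ib * iq"
    by (rule inv2_eq) (metis ib iq mult.assoc mult.commute mult.left_commute mult_1_right)
  have i3: "inv2 (P0 * a) = ip * ia"
    by (rule inv2_eq) (metis ia ip mult.assoc mult.commute mult.left_commute mult_1_right)
  have i4: "inv2 (P0 * Q0) = ip * iq"
    by (rule inv2_eq) (metis ip iq mult.assoc mult.commute mult.left_commute mult_1_right)
  have fin: "Dd * ia * ib = ib * iq + ip * ia - ip * iq"
  proof -
    have "Dd * ia * ib = (P0 * ip) * (Q0 * iq) * Dd * ia * ib" using ip iq by simp
    also have "\<dots> = (P0 * Q0 * Dd) * ip * iq * ia * ib" by (simp add: mult_ac)
    also have "\<dots> = (a * P0 + b * Q0 - a * b) * ip * iq * ia * ib" by (simp add: key)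
    also have "\<dots> = (a * ia) * (P0 * ip) * iq * ib + (b * ib) * (Q0 * iq) * ip * ia
                      - (a * ia) * (b * ib) * ip * iq" by (simp add: algebra_simps)
    also have "\<dots> = ib * iq + ip * ia - ip * iq" using ia ib ip iq by (simp add: mult_ac)
    finally show ?thesis .
  qed
  show ?thesis
    unfolding FG Ft Gt G0 F0 i1 i4 a_def[symmetric] b_def[symmetric] i2 i3 fin ..
qed

primrec isA :: "letter \<Rightarrow> bool" where
  "isA (A i) = True" | "isA (X j) = False"

lemma a_subs_simps[simp]: "a_subs [] = []" "a_subs (A i # w) = i # a_subs w"
  "a_subs (X j # w) = a_subs w" "a_subs (u @ w) = a_subs u @ a_subs w"
  by (simp_all add: a_subs_def)

lemma x_subs_simps[simp]: "x_subs [] = []" "x_subs (A i # w) = x_subs w"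
  "x_subs (X j # w) = j # x_subs w" "x_subs (u @ w) = x_subs u @ x_subs w"
  by (simp_all add: x_subs_def)

lemma subs_map[simp]: "a_subs (map A xs) = xs" "x_subs (map A xs) = []"
  "a_subs (map X xs) = []" "x_subs (map X xs) = xs"
  by (induct xs) auto

lemma filterA: "filter isA w = map A (a_subs w)"
proof (induct w)
  case (Cons a w) then show ?case by (cases a) auto
qed simp

lemma filterX: "filter (\<lambda>l. \<not> isA l) w = map X (x_subs w)"
proof (induct w)
  case (Cons a w) then show ?case by (cases a) auto
qed simp

lemma A_in_set: "A i \<in> set w \<longleftrightarrow> i \<in> set (a_subs w)"
proof (induct w)
  case (Cons a w) then show ?case by (cases a) auto
qed simp

lemma X_in_set: "X j \<in> set w \<longleftrightarrow> j \<in> set (x_subs w)"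
proof (induct w)
  case (Cons a w) then show ?case by (cases a) auto
qed simp

lemma length_subs: "length w = length (a_subs w) + length (x_subs w)"
proof (induct w)
  case (Cons a w) then show ?case by (cases a) auto
qed simp

lemma distinct_subs: "distinct w \<longleftrightarrow> distinct (a_subs w) \<and> distinct (x_subs w)"
proof (induct w)
  case (Cons a w) then show ?case by (cases a) (auto simp: A_in_set X_in_set)
qed simp

lemma subseq_subs: "subseq s w \<Longrightarrow> subseq (a_subs s) (a_subs w) \<and> subseq (x_subs s) (x_subs w)"
proof (induct rule: list_emb.induct)
  case (list_emb_Nil ys) then show ?case by simp
next
  case (list_emb_Cons xs ys y) then show ?case by (cases y) auto
next
  case (list_emb_Cons2 x y xs ys) then show ?case by (cases x) auto
qed

lemma subseq_sorted: "sorted xs \<Longrightarrow> subseq ys xs \<Longrightarrow> sorted ys"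
  by (metis sorted_nths subseq_conv_nths)

lemma subseq_distinct: "distinct xs \<Longrightarrow> subseq ys xs \<Longrightarrow> distinct ys"
  by (metis distinct_nthsI subseq_conv_nths)

lemma subseq_set: "subseq ys xs \<Longrightarrow> set ys \<subseteq> set xs"
  by (metis set_nths_subset subseq_conv_nths)

lemma valid_subseq: "valid_word w \<Longrightarrow> subseq s w \<Longrightarrow> valid_word s"
proof -
  assume v: "valid_word w" and sw: "subseq s w"
  have h: "subseq (a_subs s) (a_subs w)" "subseq (x_subs s) (x_subs w)" using subseq_subs[OF sw] by auto
  have "distinct s" using v sw subseq_distinct unfolding valid_word_def by blast
  moreover have "sorted (a_subs s)" "sorted (x_subs s)"
    using v h subseq_sorted unfolding valid_word_def by blast+
  moreover have "set (a_subs s) \<subseteq> set (a_subs w)" "set (x_subs s) \<subseteq> set (x_subs w)"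
    using h subseq_set by blast+
  ultimately show ?thesis using v unfolding valid_word_def by blast
qed

lemma subseq_rm: "subseq s (p @ l # q) \<Longrightarrow> l \<notin> set s \<Longrightarrow> subseq s (p @ q)"
proof (induct p arbitrary: s)
  case Nil then show ?case
  proof (cases s)
    case (Cons x s')
    then have "x \<noteq> l" using Nil by auto
    then show ?thesis using Nil Cons subseq_Cons2_neq by (metis append_Nil)
  qed simp
next
  case (Cons a p)
  show ?case
  proof (cases s)
    case (Cons x s')
    show ?thesis
    proof (cases "x = a")
      case True
      then have "subseq s' (p @ l # q)" using Cons.prems Cons by simp
      then have "subseq s' (p @ q)" using Cons.hyps Cons.prems Cons by simp
      then show ?thesis using True Cons by simp
    next
      case False
      then have "subseq (x # s') (p @ l # q)" using Cons.prems Cons by simp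
      then have "subseq (x # s') (p @ q)" using Cons.hyps Cons.prems Cons by simp
      then show ?thesis using False Cons by simp
    qed
  qed simp
qed

lemma subseq_eq: "subseq s w \<Longrightarrow> set w \<subseteq> set s \<Longrightarrow> distinct w \<Longrightarrow> s = w"
proof -
  assume h: "subseq s w" "set w \<subseteq> set s" "distinct w"
  have "distinct s" using h subseq_distinct by blast
  have "length s \<le> length w" using h list_emb_length by blast
  moreover have "length w \<le> length s"
    using card_mono[OF _ h(2)] distinct_card[OF h(3)] distinct_card[OF \<open>distinct s\<close>] by simp
  ultimately show ?thesis using subseq_same_length h by (metis le_antisym)
qed

lemma chain_ins: "valid_word w \<Longrightarrow> subseq s w \<Longrightarrow> (\<forall>l\<in>set w. l \<notin> set s \<longrightarrow> \<not> isA l) \<Longrightarrow> wle s w"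
proof (induct "length w" arbitrary: w rule: less_induct)
  case less
  show ?case
  proof (cases "set w \<subseteq> set s")
    case True
    then have "s = w" using subseq_eq less.prems unfolding valid_word_def by blast
    then show ?thesis unfolding wle_def by simp
  next
    case False
    then obtain l where l: "l \<in> set w" "l \<notin> set s" by blast
    then obtain p q where w: "w = p @ l # q" by (meson split_list)
    obtain j where lj: "l = X j" using less.prems(3) l by (cases l) auto
    have sub: "subseq (p @ q) w" unfolding w subseq_append' by (rule list_emb_Cons) simp
    have v: "valid_word (p @ q)" using valid_subseq[OF less.prems(1) sub] .
    have "wle s (p @ q)"
      using less.hyps[of "p @ q"] v subseq_rm[of s p l q] less.prems l unfolding w by auto
    moreover have "wcover (p @ q) w"
      unfolding wcover_def using v less.prems(1) w lj by blast
    ultimately show ?thesis unfolding wle_def by auto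
  qed
qed

lemma chain_del: "valid_word u \<Longrightarrow> subseq s u \<Longrightarrow> (\<forall>l\<in>set u. l \<notin> set s \<longrightarrow> isA l) \<Longrightarrow> wle u s"
proof (induct "length u" arbitrary: u rule: less_induct)
  case less
  show ?case
  proof (cases "set u \<subseteq> set s")
    case True
    then have "s = u" using subseq_eq less.prems unfolding valid_word_def by blast
    then show ?thesis unfolding wle_def by simp
  next
    case False
    then obtain l where l: "l \<in> set u" "l \<notin> set s" by blast
    then obtain p q where u: "u = p @ l # q" by (meson split_list)
    obtain i where li: "l = A i" using less.prems(3) l by (cases l) auto
    have sub: "subseq (p @ q) u" unfolding u subseq_append' by (rule list_emb_Cons) simp
    have v: "valid_word (p @ q)" using valid_subseq[OF less.prems(1) sub] .
    have "wle (p @ q) s"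
      using less.hyps[of "p @ q"] v subseq_rm[of s p l q] less.prems l unfolding u by auto
    moreover have "wcover u (p @ q)"
      unfolding wcover_def using v less.prems(1) u li by blast
    ultimately show ?thesis unfolding wle_def
      by (meson converse_rtranclp_into_rtranclp)
  qed
qed

lemma wle_valid: "wle u w \<Longrightarrow> valid_word u \<Longrightarrow> valid_word w"
  unfolding wle_def by (induct rule: rtranclp_induct) (auto simp: wcover_def)

lemma wle_subs: "wle u w \<Longrightarrow> subseq (a_subs w) (a_subs u) \<and> subseq (x_subs u) (x_subs w)"
  unfolding wle_def
proof (induct rule: rtranclp_induct)
  case base then show ?case by simp
next
  case (step y z)
  have "subseq (a_subs z) (a_subs y) \<and> subseq (x_subs y) (x_subs z)"
    using step(2) unfolding wcover_def
    by (auto simp: subseq_append' intro: list_emb_append_mono)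
  then show ?case using step(3) by (meson subseq_order.trans)
qed

definition Wset :: "nat list \<Rightarrow> nat list \<Rightarrow> word set" where
  "Wset us vs = {w. subseq (a_subs w) us \<and> subseq (x_subs w) vs}"

lemma valid_awd: "valid_word (awd i)"
  by (simp add: valid_word_def awd_def distinct_map inj_on_def del: upt_Suc)

lemma valid_xwd: "valid_word (xwd j)"
  by (simp add: valid_word_def xwd_def distinct_map inj_on_def del: upt_Suc)

lemma Int_eq: "{w. wle (awd i) w \<and> wle w (xwd j)} = Wset [1..<Suc i] [1..<Suc j]"
proof (intro set_eqI iffI)
  fix w assume "w \<in> {w. wle (awd i) w \<and> wle w (xwd j)}"
  then have "wle (awd i) w" "wle w (xwd j)" by auto
  then show "w \<in> Wset [1..<Suc i] [1..<Suc j]"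
    using wle_subs[of "awd i" w] wle_subs[of w "xwd j"]
    by (simp add: Wset_def awd_def xwd_def)
next
  fix w assume "w \<in> Wset [1..<Suc i] [1..<Suc j]"
  then have sa: "subseq (a_subs w) [1..<Suc i]" and sx: "subseq (x_subs w) [1..<Suc j]"
    by (auto simp: Wset_def)
  have vw: "valid_word w"
  proof -
    have "distinct (a_subs w)" "distinct (x_subs w)"
      using subseq_distinct[OF _ sa] subseq_distinct[OF _ sx] by (simp_all del: upt_Suc)
    moreover have "sorted (a_subs w)" "sorted (x_subs w)"
      using subseq_sorted[OF _ sa] subseq_sorted[OF _ sx] by (simp_all del: upt_Suc)
    moreover have "\<forall>i\<in>set (a_subs w). i \<ge> 1" "\<forall>j\<in>set (x_subs w). j \<ge> 1"
      using subseq_set[OF sa] subseq_set[OF sx] by (auto simp del: upt_Suc)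
    ultimately show ?thesis unfolding valid_word_def distinct_subs by blast
  qed
  have h1: "wle (awd i) (filter isA w)"
  proof (rule chain_del[OF valid_awd])
    show "subseq (filter isA w) (awd i)" unfolding filterA awd_def by (rule subseq_map[OF sa])
    show "\<forall>l\<in>set (awd i). l \<notin> set (filter isA w) \<longrightarrow> isA l"
      unfolding awd_def by (auto simp del: upt_Suc)
  qed
  have h2: "wle (filter isA w) w"
    by (rule chain_ins[OF vw]) simp_all
  have h3: "wle w (filter (\<lambda>l. \<not> isA l) w)"
    by (rule chain_del[OF vw]) simp_all
  have h4: "wle (filter (\<lambda>l. \<not> isA l) w) (xwd j)"
  proof (rule chain_ins[OF valid_xwd])
    show "subseq (filter (\<lambda>l. \<not> isA l) w) (xwd j)" unfolding filterX xwd_def by (rule subseq_map[OF sx])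
    show "\<forall>l\<in>set (xwd j). l \<notin> set (filter (\<lambda>l. \<not> isA l) w) \<longrightarrow> \<not> isA l"
      unfolding xwd_def by (auto simp del: upt_Suc)
  qed
  have "wle (awd i) w" using h1 h2 unfolding wle_def by (rule rtranclp_trans)
  moreover have "wle w (xwd j)" using h3 h4 unfolding wle_def by (rule rtranclp_trans)
  ultimately show "w \<in> {w. wle (awd i) w \<and> wle w (xwd j)}" by simp
qed

fun padd :: "nat \<Rightarrow> nat list \<Rightarrow> nat list" where
  "padd d [] = []" | "padd d (n # ns) = (n + d) # ns"

lemma padd0[simp]: "padd 0 ns = ns" by (cases ns) auto

definition wtf :: "(nat \<Rightarrow> nat \<Rightarrow> 'a::comm_monoid_mult) \<Rightarrow> nat \<Rightarrow> nat list \<Rightarrow> word \<Rightarrow> 'a" where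
  "wtf ff d us w = prod_list (map (\<lambda>(i, j). ff i j)
     (zip (gaps (\<lambda>l. l \<in> set w) (map A us)) (padd d (gaps (\<lambda>l. l \<in> set (map A us)) w))))"

definition wtg :: "(nat \<Rightarrow> nat \<Rightarrow> 'a::comm_monoid_mult) \<Rightarrow> nat \<Rightarrow> word \<Rightarrow> nat list \<Rightarrow> 'a" where
  "wtg gg c w vs = prod_list (map (\<lambda>(i, j). gg i j)
     (zip (padd c (gaps (\<lambda>l. l \<in> set (map X vs)) w)) (gaps (\<lambda>l. l \<in> set w) (map X vs))))"

definition SS :: "(nat \<Rightarrow> nat \<Rightarrow> 'a::comm_semiring_1) \<Rightarrow> (nat \<Rightarrow> nat \<Rightarrow> 'a) \<Rightarrow> nat \<Rightarrow> nat \<Rightarrow> nat list \<Rightarrow> nat list \<Rightarrow> 'a" where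
  "SS ff gg c d us vs = (\<Sum>w\<in>Wset us vs. wtf ff d us w * wtg gg c w vs)"

lemma gaps_ne: "gaps P w \<noteq> []"
  by (induct w) (auto split: list.split)

lemma gaps_cong: "(\<And>x. x \<in> set xs \<Longrightarrow> P x = Q x) \<Longrightarrow> gaps P xs = gaps Q xs"
  by (induct xs) auto

lemma gaps_none: "(\<And>x. x \<in> set xs \<Longrightarrow> \<not> P x) \<Longrightarrow> gaps P xs = [length xs]"
  by (induct xs) auto

lemma gaps_prefix: "(\<And>x. x \<in> set xs \<Longrightarrow> \<not> P x) \<Longrightarrow> P y \<Longrightarrow> gaps P (xs @ y # ys) = length xs # gaps P ys"
  by (induct xs) auto

lemma wtf_nil: "wtf ff d us [] = ff (length us) d"
  unfolding wtf_def by (subst gaps_none) auto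

lemma wtg_nil: "wtg gg c [] vs = gg c (length vs)"
  unfolding wtg_def by (subst gaps_none) auto

lemma wtf_X: "wtf ff d us (X j # w') = wtf ff (Suc d) us w'"
proof -
  obtain n ns where g: "gaps (\<lambda>l. l \<in> set (map A us)) w' = n # ns"
    using gaps_ne by (metis list.exhaust)
  have g2: "gaps (\<lambda>l. l \<in> set (map A us)) (X j # w') = Suc n # ns" using g by auto
  have g3: "gaps (\<lambda>l. l \<in> set (X j # w')) (map A us) = gaps (\<lambda>l. l \<in> set w') (map A us)"
    by (rule gaps_cong) auto
  show ?thesis unfolding wtf_def g g2 g3 by simp
qed

lemma wtg_A: "wtg gg c (A i # w') vs = wtg gg (Suc c) w' vs"
proof -
  obtain n ns where g: "gaps (\<lambda>l. l \<in> set (map X vs)) w' = n # ns"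
    using gaps_ne by (metis list.exhaust)
  have g2: "gaps (\<lambda>l. l \<in> set (map X vs)) (A i # w') = Suc n # ns" using g by auto
  have g3: "gaps (\<lambda>l. l \<in> set (A i # w')) (map X vs) = gaps (\<lambda>l. l \<in> set w') (map X vs)"
    by (rule gaps_cong) auto
  show ?thesis unfolding wtg_def g g2 g3 by simp
qed

lemma distinct_split:
  assumes "distinct us" "k < length us"
  shows "us ! k \<notin> set (take k us)" "us ! k \<notin> set (drop (Suc k) us)"
    "set (take k us) \<inter> set (drop (Suc k) us) = {}"
proof -
  have "distinct (take k us @ us ! k # drop (Suc k) us)"
    using assms id_take_nth_drop by metis
  then show "us ! k \<notin> set (take k us)" "us ! k \<notin> set (drop (Suc k) us)"
    "set (take k us) \<inter> set (drop (Suc k) us) = {}" by auto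
qed

lemma wtf_A:
  assumes du: "distinct us" and k: "k < length us" and w': "w' \<in> Wset (drop (Suc k) us) vs"
  shows "wtf ff d us (A (us ! k) # w') = ff k d * wtf ff 0 (drop (Suc k) us) w'"
proof -
  define w where "w = A (us ! k) # w'"
  have sub: "set (a_subs w') \<subseteq> set (drop (Suc k) us)"
    using w' subseq_set unfolding Wset_def by blast
  note ds = distinct_split[OF du k]
  have us: "map A us = map A (take k us) @ A (us ! k) # map A (drop (Suc k) us)"
    using id_take_nth_drop[OF k] by (metis list.simps(9) map_append)
  have e1: "gaps (\<lambda>l. l \<in> set w) (map A us) = k # gaps (\<lambda>l. l \<in> set w) (map A (drop (Suc k) us))"
  proof -
    have "gaps (\<lambda>l. l \<in> set w) (map A us) = length (map A (take k us)) # gaps (\<lambda>l. l \<in> set w) (map A (drop (Suc k) us))"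
      unfolding us
    proof (rule gaps_prefix)
      fix x assume "x \<in> set (map A (take k us))"
      then obtain m where m: "x = A m" "m \<in> set (take k us)" by auto
      then have "m \<noteq> us ! k" using ds by auto
      moreover have "m \<notin> set (a_subs w')" using m ds sub by auto
      ultimately show "x \<notin> set w" unfolding w_def m by (simp add: A_in_set)
    qed (simp add: w_def)
    then show ?thesis using k by simp
  qed
  have e2: "gaps (\<lambda>l. l \<in> set w) (map A (drop (Suc k) us)) = gaps (\<lambda>l. l \<in> set w') (map A (drop (Suc k) us))"
    by (rule gaps_cong) (use ds in \<open>auto simp: w_def\<close>)
  have e3: "gaps (\<lambda>l. l \<in> set (map A us)) w = 0 # gaps (\<lambda>l. l \<in> set (map A us)) w'"
    using k by (simp add: w_def)
  have e4: "gaps (\<lambda>l. l \<in> set (map A us)) w' = gaps (\<lambda>l. l \<in> set (map A (drop (Suc k) us))) w'"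
  proof (rule gaps_cong)
    fix x assume x: "x \<in> set w'"
    show "(x \<in> set (map A us)) = (x \<in> set (map A (drop (Suc k) us)))"
    proof (cases x)
      case (A m)
      then have "m \<in> set (drop (Suc k) us)" using x sub by (auto simp: A_in_set)
      then show ?thesis using A set_drop_subset by fastforce
    qed auto
  qed
  show ?thesis
    unfolding w_def[symmetric] wtf_def e1 e2 e3 e4 by simp
qed

lemma wtg_X:
  assumes dv: "distinct vs" and k: "k < length vs" and w': "w' \<in> Wset us (drop (Suc k) vs)"
  shows "wtg gg c (X (vs ! k) # w') vs = gg c k * wtg gg 0 w' (drop (Suc k) vs)"
proof -
  define w where "w = X (vs ! k) # w'"
  have sub: "set (x_subs w') \<subseteq> set (drop (Suc k) vs)"
    using w' subseq_set unfolding Wset_def by blast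
  note ds = distinct_split[OF dv k]
  have vs: "map X vs = map X (take k vs) @ X (vs ! k) # map X (drop (Suc k) vs)"
    using id_take_nth_drop[OF k] by (metis list.simps(9) map_append)
  have e1: "gaps (\<lambda>l. l \<in> set w) (map X vs) = k # gaps (\<lambda>l. l \<in> set w) (map X (drop (Suc k) vs))"
  proof -
    have "gaps (\<lambda>l. l \<in> set w) (map X vs) = length (map X (take k vs)) # gaps (\<lambda>l. l \<in> set w) (map X (drop (Suc k) vs))"
      unfolding vs
    proof (rule gaps_prefix)
      fix x assume "x \<in> set (map X (take k vs))"
      then obtain m where m: "x = X m" "m \<in> set (take k vs)" by auto
      then have "m \<noteq> vs ! k" using ds by auto
      moreover have "m \<notin> set (x_subs w')" using m ds sub by auto
      ultimately show "x \<notin> set w" unfolding w_def m by (simp add: X_in_set)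
    qed (simp add: w_def)
    then show ?thesis using k by simp
  qed
  have e2: "gaps (\<lambda>l. l \<in> set w) (map X (drop (Suc k) vs)) = gaps (\<lambda>l. l \<in> set w') (map X (drop (Suc k) vs))"
    by (rule gaps_cong) (use ds in \<open>auto simp: w_def\<close>)
  have e3: "gaps (\<lambda>l. l \<in> set (map X vs)) w = 0 # gaps (\<lambda>l. l \<in> set (map X vs)) w'"
    using k by (simp add: w_def)
  have e4: "gaps (\<lambda>l. l \<in> set (map X vs)) w' = gaps (\<lambda>l. l \<in> set (map X (drop (Suc k) vs))) w'"
  proof (rule gaps_cong)
    fix x assume x: "x \<in> set w'"
    show "(x \<in> set (map X vs)) = (x \<in> set (map X (drop (Suc k) vs)))"
    proof (cases x)
      case (X m)
      then have "m \<in> set (drop (Suc k) vs)" using x sub by (auto simp: X_in_set)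
      then show ?thesis using X set_drop_subset by fastforce
    qed auto
  qed
  show ?thesis
    unfolding w_def[symmetric] wtg_def e1 e2 e3 e4 by simp
qed

lemma subseq_Cons_iff: "subseq (x # xs) ys \<longleftrightarrow> (\<exists>k<length ys. ys ! k = x \<and> subseq xs (drop (Suc k) ys))"
proof
  assume "subseq (x # xs) ys"
  from list_emb_ConsD[OF this] obtain us v vs where h: "ys = us @ v # vs" "x = v" "subseq xs vs"
    by blast
  have "length us < length ys" "ys ! length us = x" "drop (Suc (length us)) ys = vs"
    using h by simp_all
  then show "\<exists>k<length ys. ys ! k = x \<and> subseq xs (drop (Suc k) ys)"
    using h(3) by blast
next
  assume "\<exists>k<length ys. ys ! k = x \<and> subseq xs (drop (Suc k) ys)"
  then obtain k where k: "k < length ys" "ys ! k = x" "subseq xs (drop (Suc k) ys)" by blast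
  have "subseq (x # xs) (ys ! k # drop (Suc k) ys)" using k by simp
  then have "subseq (x # xs) (take k ys @ ys ! k # drop (Suc k) ys)" by (rule list_emb_append2)
  then show "subseq (x # xs) ys" using id_take_nth_drop[OF k(1)] by simp
qed

lemma Wset_decomp: "Wset us vs = insert []
   ((\<Union>k\<in>{..<length us}. Cons (A (us ! k)) ` Wset (drop (Suc k) us) vs) \<union>
    (\<Union>k\<in>{..<length vs}. Cons (X (vs ! k)) ` Wset us (drop (Suc k) vs)))"
proof (intro set_eqI)
  fix w
  show "w \<in> Wset us vs \<longleftrightarrow> w \<in> insert []
   ((\<Union>k\<in>{..<length us}. Cons (A (us ! k)) ` Wset (drop (Suc k) us) vs) \<union>
    (\<Union>k\<in>{..<length vs}. Cons (X (vs ! k)) ` Wset us (drop (Suc k) vs)))"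
  proof (cases w)
    case Nil then show ?thesis by (simp add: Wset_def)
  next
    case (Cons l w')
    show ?thesis
    proof (cases l)
      case (A i)
      have "w \<in> Wset us vs \<longleftrightarrow> (\<exists>k<length us. us ! k = i \<and> w' \<in> Wset (drop (Suc k) us) vs)"
        unfolding Cons A Wset_def by (simp add: subseq_Cons_iff) blast
      moreover have "w \<notin> (\<Union>k\<in>{..<length vs}. Cons (X (vs ! k)) ` Wset us (drop (Suc k) vs))"
        unfolding Cons A by blast
      moreover have "w \<in> (\<Union>k\<in>{..<length us}. Cons (A (us ! k)) ` Wset (drop (Suc k) us) vs)
           \<longleftrightarrow> (\<exists>k<length us. us ! k = i \<and> w' \<in> Wset (drop (Suc k) us) vs)"
        unfolding Cons A by blast
      ultimately show ?thesis unfolding Cons by blast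
    next
      case (X j)
      have "w \<in> Wset us vs \<longleftrightarrow> (\<exists>k<length vs. vs ! k = j \<and> w' \<in> Wset us (drop (Suc k) vs))"
        unfolding Cons X Wset_def by (simp add: subseq_Cons_iff) blast
      moreover have "w \<notin> (\<Union>k\<in>{..<length us}. Cons (A (us ! k)) ` Wset (drop (Suc k) us) vs)"
        unfolding Cons X by blast
      moreover have "w \<in> (\<Union>k\<in>{..<length vs}. Cons (X (vs ! k)) ` Wset us (drop (Suc k) vs))
           \<longleftrightarrow> (\<exists>k<length vs. vs ! k = j \<and> w' \<in> Wset us (drop (Suc k) vs))"
        unfolding Cons X by blast
      ultimately show ?thesis unfolding Cons by blast
    qed
  qed
qed

lemma finite_Wset: "finite (Wset us vs)"
proof (rule finite_subset)
  show "Wset us vs \<subseteq> {w. set w \<subseteq> A ` set us \<union> X ` set vs \<and> length w \<le> length us + length vs}"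
  proof (rule subsetI, rule CollectI, rule conjI)
    fix w assume w: "w \<in> Wset us vs"
    then have sa: "set (a_subs w) \<subseteq> set us" and sx: "set (x_subs w) \<subseteq> set vs"
      using subseq_set unfolding Wset_def by blast+
    show "set w \<subseteq> A ` set us \<union> X ` set vs"
    proof
      fix l assume l: "l \<in> set w"
      show "l \<in> A ` set us \<union> X ` set vs"
      proof (cases l)
        case (A i)
        then have "i \<in> set (a_subs w)" using l by (simp add: A_in_set[symmetric])
        then show ?thesis using sa A by auto
      next
        case (X j)
        then have "j \<in> set (x_subs w)" using l by (simp add: X_in_set[symmetric])
        then show ?thesis using sx X by auto
      qed
    qed
    show "length w \<le> length us + length vs"
      using w unfolding Wset_def using list_emb_length length_subs[of w] by (metis add_le_mono mem_Collect_eq)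
  qed
  show "finite {w. set w \<subseteq> A ` set us \<union> X ` set vs \<and> length w \<le> length us + length vs}"
    by (rule finite_lists_length_le) simp
qed

lemma SS_rec:
  fixes ff gg :: "nat \<Rightarrow> nat \<Rightarrow> 'a::comm_semiring_1"
  assumes du: "distinct us" and dv: "distinct vs"
  shows "SS ff gg c d us vs = ff (length us) d * gg c (length vs)
     + (\<Sum>k<length us. ff k d * SS ff gg (Suc c) 0 (drop (Suc k) us) vs)
     + (\<Sum>k<length vs. gg c k * SS ff gg 0 (Suc d) us (drop (Suc k) vs))"
proof -
  define F where "F w = wtf ff d us w * wtg gg c w vs" for w
  define UA where "UA = (\<Union>k\<in>{..<length us}. Cons (A (us ! k)) ` Wset (drop (Suc k) us) vs)"
  define UX where "UX = (\<Union>k\<in>{..<length vs}. Cons (X (vs ! k)) ` Wset us (drop (Suc k) vs))"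
  have dec: "Wset us vs = insert [] (UA \<union> UX)" unfolding UA_def UX_def by (rule Wset_decomp)
  have fin: "finite (UA \<union> UX)" using finite_Wset[of us vs] unfolding dec by simp
  then have finA: "finite UA" and finX: "finite UX" by auto
  have nin: "[] \<notin> UA \<union> UX" unfolding UA_def UX_def by auto
  have disj: "UA \<inter> UX = {}" unfolding UA_def UX_def by auto
  have sA: "sum F UA = (\<Sum>k<length us. ff k d * SS ff gg (Suc c) 0 (drop (Suc k) us) vs)"
  proof -
    have "sum F UA = (\<Sum>k<length us. sum F (Cons (A (us ! k)) ` Wset (drop (Suc k) us) vs))"
      unfolding UA_def
    proof (rule sum.UNION_disjoint)
      show "\<forall>i\<in>{..<length us}. finite (Cons (A (us ! i)) ` Wset (drop (Suc i) us) vs)"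
        by (simp add: finite_Wset)
      show "\<forall>i\<in>{..<length us}. \<forall>j\<in>{..<length us}. i \<noteq> j \<longrightarrow>
          Cons (A (us ! i)) ` Wset (drop (Suc i) us) vs \<inter> Cons (A (us ! j)) ` Wset (drop (Suc j) us) vs = {}"
        using du by (auto simp: nth_eq_iff_index_eq)
    qed simp
    also have "\<dots> = (\<Sum>k<length us. ff k d * SS ff gg (Suc c) 0 (drop (Suc k) us) vs)"
    proof (rule sum.cong[OF refl])
      fix k assume k: "k \<in> {..<length us}"
      have "sum F (Cons (A (us ! k)) ` Wset (drop (Suc k) us) vs) =
            (\<Sum>w'\<in>Wset (drop (Suc k) us) vs. F (A (us ! k) # w'))"
        by (rule sum.reindex_cong[of "Cons (A (us ! k))"]) (auto simp: inj_on_def)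
      also have "\<dots> = (\<Sum>w'\<in>Wset (drop (Suc k) us) vs. ff k d * (wtf ff 0 (drop (Suc k) us) w' * wtg gg (Suc c) w' vs))"
        by (rule sum.cong[OF refl]) (use k du in \<open>simp add: F_def wtf_A wtg_A mult.assoc\<close>)
      also have "\<dots> = ff k d * SS ff gg (Suc c) 0 (drop (Suc k) us) vs"
        by (simp add: SS_def sum_distrib_left)
      finally show "sum F (Cons (A (us ! k)) ` Wset (drop (Suc k) us) vs) = ff k d * SS ff gg (Suc c) 0 (drop (Suc k) us) vs" .
    qed
    finally show ?thesis .
  qed
  have sX: "sum F UX = (\<Sum>k<length vs. gg c k * SS ff gg 0 (Suc d) us (drop (Suc k) vs))"
  proof -
    have "sum F UX = (\<Sum>k<length vs. sum F (Cons (X (vs ! k)) ` Wset us (drop (Suc k) vs)))"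
      unfolding UX_def
    proof (rule sum.UNION_disjoint)
      show "\<forall>i\<in>{..<length vs}. finite (Cons (X (vs ! i)) ` Wset us (drop (Suc i) vs))"
        by (simp add: finite_Wset)
      show "\<forall>i\<in>{..<length vs}. \<forall>j\<in>{..<length vs}. i \<noteq> j \<longrightarrow>
          Cons (X (vs ! i)) ` Wset us (drop (Suc i) vs) \<inter> Cons (X (vs ! j)) ` Wset us (drop (Suc j) vs) = {}"
        using dv by (auto simp: nth_eq_iff_index_eq)
    qed simp
    also have "\<dots> = (\<Sum>k<length vs. gg c k * SS ff gg 0 (Suc d) us (drop (Suc k) vs))"
    proof (rule sum.cong[OF refl])
      fix k assume k: "k \<in> {..<length vs}"
      have "sum F (Cons (X (vs ! k)) ` Wset us (drop (Suc k) vs)) =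
            (\<Sum>w'\<in>Wset us (drop (Suc k) vs). F (X (vs ! k) # w'))"
        by (rule sum.reindex_cong[of "Cons (X (vs ! k))"]) (auto simp: inj_on_def)
      also have "\<dots> = (\<Sum>w'\<in>Wset us (drop (Suc k) vs). gg c k * (wtf ff (Suc d) us w' * wtg gg 0 w' (drop (Suc k) vs)))"
        by (rule sum.cong[OF refl]) (use k dv in \<open>simp add: F_def wtf_X wtg_X mult_ac\<close>)
      also have "\<dots> = gg c k * SS ff gg 0 (Suc d) us (drop (Suc k) vs)"
        by (simp add: SS_def sum_distrib_left)
      finally show "sum F (Cons (X (vs ! k)) ` Wset us (drop (Suc k) vs)) = gg c k * SS ff gg 0 (Suc d) us (drop (Suc k) vs)" .
    qed
    finally show ?thesis .
  qed
  have "SS ff gg c d us vs = F [] + (sum F UA + sum F UX)"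
    unfolding SS_def F_def[symmetric] dec
    by (simp add: sum.insert[OF fin nin] sum.union_disjoint[OF finA finX disj])
  then show ?thesis unfolding sA sX by (simp add: F_def wtf_nil wtg_nil add.assoc)
qed

lemma SS_inv:
  fixes ff gg :: "nat \<Rightarrow> nat \<Rightarrow> 'a::comm_semiring_1"
  shows "distinct us \<Longrightarrow> distinct vs \<Longrightarrow> SS ff gg c d us vs = SS ff gg c d [0..<length us] [0..<length vs]"
proof (induct "length us + length vs" arbitrary: c d us vs rule: less_induct)
  case less
  have IH: "SS ff gg c' d' us' vs' = SS ff gg c' d' [0..<length us'] [0..<length vs']"
    if "length us' + length vs' < length us + length vs" "distinct us'" "distinct vs'" for c' d' us' vs'
    using less.hyps that by blast
  define n where "n = length us"
  define m where "m = length vs"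
  have A1: "(\<Sum>k<n. ff k d * SS ff gg (Suc c) 0 (drop (Suc k) us) vs)
      = (\<Sum>k<n. ff k d * SS ff gg (Suc c) 0 (drop (Suc k) [0..<n]) [0..<m])"
  proof (rule sum.cong[OF refl])
    fix k assume k: "k \<in> {..<n}"
    have "SS ff gg (Suc c) 0 (drop (Suc k) us) vs = SS ff gg (Suc c) 0 [0..<n - Suc k] [0..<m]"
      using IH[of "drop (Suc k) us" vs] k less.prems by (simp add: n_def m_def)
    moreover have "SS ff gg (Suc c) 0 (drop (Suc k) [0..<n]) [0..<m] = SS ff gg (Suc c) 0 [0..<n - Suc k] [0..<m]"
      using IH[of "drop (Suc k) [0..<n]" "[0..<m]"] k by (simp add: n_def m_def)
    ultimately show "ff k d * SS ff gg (Suc c) 0 (drop (Suc k) us) vs = ff k d * SS ff gg (Suc c) 0 (drop (Suc k) [0..<n]) [0..<m]"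
      by simp
  qed
  have A2: "(\<Sum>k<m. gg c k * SS ff gg 0 (Suc d) us (drop (Suc k) vs))
      = (\<Sum>k<m. gg c k * SS ff gg 0 (Suc d) [0..<n] (drop (Suc k) [0..<m]))"
  proof (rule sum.cong[OF refl])
    fix k assume k: "k \<in> {..<m}"
    have "SS ff gg 0 (Suc d) us (drop (Suc k) vs) = SS ff gg 0 (Suc d) [0..<n] [0..<m - Suc k]"
      using IH[of us "drop (Suc k) vs"] k less.prems by (simp add: n_def m_def)
    moreover have "SS ff gg 0 (Suc d) [0..<n] (drop (Suc k) [0..<m]) = SS ff gg 0 (Suc d) [0..<n] [0..<m - Suc k]"
      using IH[of "[0..<n]" "drop (Suc k) [0..<m]"] k by (simp add: n_def m_def)
    ultimately show "gg c k * SS ff gg 0 (Suc d) us (drop (Suc k) vs) = gg c k * SS ff gg 0 (Suc d) [0..<n] (drop (Suc k) [0..<m])"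
      by simp
  qed
  have "SS ff gg c d us vs = ff n d * gg c m
     + (\<Sum>k<n. ff k d * SS ff gg (Suc c) 0 (drop (Suc k) us) vs)
     + (\<Sum>k<m. gg c k * SS ff gg 0 (Suc d) us (drop (Suc k) vs))"
    unfolding n_def m_def by (rule SS_rec[OF less.prems])
  also have "\<dots> = SS ff gg c d [0..<n] [0..<m]"
    unfolding A1 A2 using SS_rec[of "[0..<n]" "[0..<m]" ff gg c d] by simp
  finally show ?case unfolding n_def m_def .
qed

definition hh :: "(nat \<Rightarrow> nat \<Rightarrow> 'a::comm_semiring_1) \<Rightarrow> (nat \<Rightarrow> nat \<Rightarrow> 'a) \<Rightarrow> nat \<Rightarrow> nat \<Rightarrow> nat \<Rightarrow> nat \<Rightarrow> 'a" where
  "hh ff gg c d i j = SS ff gg c d [0..<i] [0..<j]"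

lemma hh_rec: "hh ff gg c d i j = ff i d * gg c j + (\<Sum>k<i. ff k d * hh ff gg (Suc c) 0 (i - Suc k) j)
                  + (\<Sum>k<j. gg c k * hh ff gg 0 (Suc d) i (j - Suc k))"
proof -
  have A1: "SS ff gg (Suc c) 0 [Suc k..<i] [0..<j] = hh ff gg (Suc c) 0 (i - Suc k) j" for k
    unfolding hh_def by (subst SS_inv) simp_all
  have A2: "SS ff gg 0 (Suc d) [0..<i] [Suc k..<j] = hh ff gg 0 (Suc d) i (j - Suc k)" for k
    unfolding hh_def by (subst SS_inv) simp_all
  show ?thesis unfolding hh_def[of ff gg c d i j]
    using SS_rec[of "[0..<i]" "[0..<j]" ff gg c d] by (simp add: A1 A2)
qed

lemma conv_eq:
  fixes f g :: "word \<Rightarrow> word \<Rightarrow> 'a::comm_ring_1"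
  assumes mf: "multiplicative f" and mg: "multiplicative g"
  shows "fval (conv f g) i j = hh (fval f) (fval g) 0 0 i j"
proof -
  have "fval (conv f g) i j = (\<Sum>w\<in>{w. wle (awd i) w \<and> wle w (xwd j)}. f (awd i) w * g w (xwd j))"
    by (simp add: fval_def conv_def)
  also have "\<dots> = (\<Sum>w\<in>Wset [1..<Suc i] [1..<Suc j]. wtf (fval f) 0 [1..<Suc i] w * wtg (fval g) 0 w [1..<Suc j])"
    unfolding Int_eq[symmetric]
  proof (rule sum.cong[OF refl])
    fix w assume "w \<in> {w. wle (awd i) w \<and> wle w (xwd j)}"
    then have w1: "wle (awd i) w" and w2: "wle w (xwd j)" by auto
    have vw: "valid_word w" using wle_valid[OF w1 valid_awd] .
    have "f (awd i) w = prod_list (map (\<lambda>(i, j). fval f i j) (ctype (awd i) w))"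
      using mf vw valid_awd w1 unfolding multiplicative_def by blast
    also have "\<dots> = wtf (fval f) 0 [1..<Suc i] w"
      unfolding ctype_def wtf_def awd_def padd0 ..
    finally have ef: "f (awd i) w = wtf (fval f) 0 [1..<Suc i] w" .
    have "g w (xwd j) = prod_list (map (\<lambda>(i, j). fval g i j) (ctype w (xwd j)))"
      using mg vw valid_xwd w2 unfolding multiplicative_def by blast
    also have "\<dots> = wtg (fval g) 0 w [1..<Suc j]"
      unfolding ctype_def wtg_def xwd_def padd0 ..
    finally have eg: "g w (xwd j) = wtg (fval g) 0 w [1..<Suc j]" .
    show "f (awd i) w * g w (xwd j) = wtf (fval f) 0 [1..<Suc i] w * wtg (fval g) 0 w [1..<Suc j]"
      using ef eg by simp
  qed
  also have "\<dots> = SS (fval f) (fval g) 0 0 [1..<Suc i] [1..<Suc j]"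
    unfolding SS_def ..
  also have "\<dots> = hh (fval f) (fval g) 0 0 i j"
    unfolding hh_def by (subst SS_inv) (simp_all del: upt_Suc)
  finally show ?thesis .
qed

theorem theorem5p2:
  fixes f g :: "word \<Rightarrow> word \<Rightarrow> 'a::comm_ring_1"
  assumes rat: "\<And>n::nat. n > 0 \<Longrightarrow> \<exists>r::'a. of_nat n * r = 1"
    and mf: "multiplicative f" and mg: "multiplicative g"
  defines "F \<equiv> gen_series (fval f)"
    and "G \<equiv> gen_series (fval g)"
    and "FG \<equiv> gen_series (fval (conv f g))"
  defines "F0 \<equiv> at_y0 F" and "G0 \<equiv> at_x0 G"
  defines "Ft \<equiv> subst_y F G0" and "Gt \<equiv> subst_x G (fps_nth F 0)"
  shows "inv2 FG = inv2 (Ft * G0) + inv2 (F0 * Gt) - inv2 (F0 * G0)"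
proof -
  have f00: "fval f 0 0 = 1" using mf unfolding multiplicative_def by blast
  have g00: "fval g 0 0 = 1" using mg unfolding multiplicative_def by blast
  have "fval (conv f g) = (\<lambda>i j. hh (fval f) (fval g) 0 0 i j)"
    by (intro ext) (rule conv_eq[OF mf mg])
  then have FG: "FG = gen_series (\<lambda>i j. hh (fval f) (fval g) 0 0 i j)"
    unfolding FG_def by simp
  show ?thesis
    unfolding FG F0_def G0_def Ft_def Gt_def F_def G_def
    by (rule GF_main[OF f00 g00 hh_rec[of "fval f" "fval g"]])
qed

end
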